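(* Fix $\epsilon>0$ and $\alpha\in(1,\infty)$. For each prior $\rho$ and pair $(s_i,s_j)\in\mathbb{S}$, let $\pi^*_{i,j,\rho}$ be the comonotone coupling of $P_{X|s_i,\rho}$ and $P_{X|s_j,\rho}$ and suppose $\sigma^2_{i,j,\rho}>0$ satisfies $$\int e^{\alpha(\alpha-1)\frac{(x-x')^2}{2\sigma^2_{i,j,\rho}}}\,\mathrm{d}\pi^*_{i,j,\rho}(x,x')=e^{(\alpha-1)\epsilon}.$$ Let $\sigma^2$ be the maximum of $\sigma^2_{i,j,\rho}$ over all $(s_i,s_j)\in\mathbb{S}$ and all $\rho$ (assumed to exist). Then releasing $Y=X+N$ with $N$ Gaussian of mean $0$ and variance $\sigma^2$ (density $\frac{1}{\sqrt{2\pi}\sigma}e^{-z^2/(2\sigma^2)}$), independent of $(X,S)$, attains $(\alpha,\epsilon)$-Rényi pufferfish privacy.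
   Context: Setting: a sensitive secret $S$ and real-valued data $X$. For each secret value $s$ and each adversarial prior belief $\rho$ (ranging over a given set of priors), $X$ given $S=s$ has a density $P_{X|s,\rho}$ on $\mathbb{R}$. $\mathbb{S}$ is a given set of ordered secret pairs. The released data is $Y=X+N$ with $N$ independent of $(X,S)$, so $P_{Y|S}(y|s,\rho)=\int P_N(y-x)P_{X|S}(x|s,\rho)\,\mathrm{d}x$. For densities $P\ll Q$, $D_\alpha(P\|Q)=\frac{1}{\alpha-1}\log\int P^\alpha Q^{1-\alpha}$. $Y$ satisfies $(\alpha,\epsilon)$-Rényi pufferfish privacy if $D_\alpha(P_{Y|s_i,\rho}\|P_{Y|s_j,\rho})\le\epsilon$ for all $\rho$ and all $(s_i,s_j)\in\mathbb{S}$. The comonotone (Kantorovich optimal) coupling of two distributions on $\mathbb{R}$ with CDFs $F_i,F_j$ is the joint distribution with joint CDF $\min\{F_i(x),F_j(x')\}$, i.e. the law of $(F_i^{-1}(U),F_j^{-1}(U))$, $U\sim\mathrm{Unif}(0,1)$. *)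

theory Defs
  imports "HOL-Probability.Probability"
begin

definition is_density :: "(real \<Rightarrow> real) \<Rightarrow> bool" where
  "is_density f \<longleftrightarrow> f \<in> borel_measurable lborel \<and> (\<forall>x. 0 \<le> f x)
     \<and> (\<integral>\<^sup>+ x. ennreal (f x) \<partial>lborel) = 1"

definition cdf_of :: "(real \<Rightarrow> real) \<Rightarrow> real \<Rightarrow> real" where
  "cdf_of f x = (LINT t:{..x}|lborel. f t)"

definition quantile_of :: "(real \<Rightarrow> real) \<Rightarrow> real \<Rightarrow> real" where
  "quantile_of f u = Inf {x. u \<le> cdf_of f x}"

definition comonotone_coupling :: "(real \<Rightarrow> real) \<Rightarrow> (real \<Rightarrow> real) \<Rightarrow> (real \<times> real) measure" where
  "comonotone_coupling fi fj =
     distr (uniform_measure lborel {0<..<1::real}) borel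
       (\<lambda>u. (quantile_of fi u, quantile_of fj u))"

definition renyi_div :: "real \<Rightarrow> (real \<Rightarrow> real) \<Rightarrow> (real \<Rightarrow> real) \<Rightarrow> ereal" where
  "renyi_div \<alpha> p q =
     (let I = (\<integral>\<^sup>+ x. ennreal (p x powr \<alpha> * q x powr (1 - \<alpha>)) \<partial>lborel)
      in if I = \<infinity> then \<infinity> else ereal (ln (enn2real I) / (\<alpha> - 1)))"

text \<open>Density of Y = X + N, where X has density f and N has density fN, independent.\<close>
definition conv_density :: "(real \<Rightarrow> real) \<Rightarrow> (real \<Rightarrow> real) \<Rightarrow> real \<Rightarrow> real" where
  "conv_density fN f y = (\<integral> x. fN (y - x) * f x \<partial>lborel)"

definition renyi_pufferfish :: "real \<Rightarrow> real \<Rightarrow> 'p set \<Rightarrow> ('s \<times> 's) set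
    \<Rightarrow> ('s \<Rightarrow> 'p \<Rightarrow> real \<Rightarrow> real) \<Rightarrow> (real \<Rightarrow> real) \<Rightarrow> bool" where
  "renyi_pufferfish \<alpha> \<epsilon> Priors SS PX fN \<longleftrightarrow>
     (\<forall>\<rho>\<in>Priors. \<forall>(si, sj)\<in>SS.
        renyi_div \<alpha> (conv_density fN (PX si \<rho>)) (conv_density fN (PX sj \<rho>)) \<le> ereal \<epsilon>)"

end

theory Submission
  imports Defs
begin

lemma density_real_distribution:
  assumes "is_density f"
  shows "real_distribution (density lborel (\<lambda>x. ennreal (f x)))"
    and "cdf (density lborel (\<lambda>x. ennreal (f x))) = cdf_of f"
proof -
  let ?M = "density lborel (\<lambda>x. ennreal (f x))"
  have fm[measurable]: "f \<in> borel_measurable borel" and fnn: "\<And>x. 0 \<le> f x"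
    and f1: "(\<integral>\<^sup>+ x. ennreal (f x) \<partial>lborel) = 1"
    using assms unfolding is_density_def by auto
  interpret prob_space ?M
    by (rule prob_spaceI) (simp add: emeasure_density f1)
  show "real_distribution ?M"
    by unfold_locales simp_all
  show "cdf ?M = cdf_of f"
  proof
    fix x
    have "cdf ?M x = enn2real (emeasure ?M {..x})"
      by (simp add: cdf_def measure_def)
    also have "\<dots> = enn2real (\<integral>\<^sup>+ t. ennreal (f t) * indicator {..x} t \<partial>lborel)"
      by (simp add: emeasure_density)
    also have "\<dots> = enn2real (\<integral>\<^sup>+ t. ennreal (indicator {..x} t *\<^sub>R f t) \<partial>lborel)"
      by (intro arg_cong[where f=enn2real] nn_integral_cong) (auto simp: indicator_def)
    also have "\<dots> = cdf_of f x"
      unfolding cdf_of_def set_lebesgue_integral_def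
      by (rule integral_eq_nn_integral[symmetric]) (auto simp: fnn)
    finally show "cdf ?M x = cdf_of f x" .
  qed
qed


lemma quantile_props:
  assumes "is_density f"
  shows "quantile_of f \<in> borel_measurable borel"
    and "\<And>h. h \<in> borel_measurable borel \<Longrightarrow>
      (\<integral>\<^sup>+u. h (quantile_of f u) * indicator {0<..<1} u \<partial>lborel) = (\<integral>\<^sup>+x. ennreal (f x) * h x \<partial>lborel)"
proof -
  let ?M = "density lborel (\<lambda>x. ennreal (f x))"
  have fm[measurable]: "f \<in> borel_measurable borel"
    using assms unfolding is_density_def by auto
  interpret C: cdf_distribution ?M
    unfolding cdf_distribution_def using density_real_distribution[OF assms] by simp
  have cdfeq: "cdf ?M = cdf_of f" using density_real_distribution[OF assms] by simp
  have qI: "quantile_of f u = C.I u" for u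
    unfolding quantile_of_def cdfeq ..
  let ?\<Omega> = "{0<..<1::real}"
  have qform: "quantile_of f = (\<lambda>u. if u \<in> ?\<Omega> then (if u \<in> ?\<Omega> then C.I u else 0)
      else if u \<le> 0 then Inf UNIV else if u = 1 then quantile_of f 1 else Inf {})"
  proof
    fix u :: real
    show "quantile_of f u = (if u \<in> ?\<Omega> then (if u \<in> ?\<Omega> then C.I u else 0)
      else if u \<le> 0 then Inf UNIV else if u = 1 then quantile_of f 1 else Inf {})"
    proof (cases "u \<in> ?\<Omega>")
      case True then show ?thesis by (simp add: qI)
    next
      case False
      have "u \<le> 0 \<Longrightarrow> {x. u \<le> cdf ?M x} = UNIV"
        using C.cdf_nonneg by (auto intro: order_trans)
      moreover have "u > 1 \<Longrightarrow> {x. u \<le> cdf ?M x} = {}"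
        using C.cdf_bounded_prob by (auto simp: not_le intro: le_less_trans)
      ultimately show ?thesis using False qI by auto
    qed
  qed
  have Im: "(\<lambda>u. if u \<in> ?\<Omega> then C.I u else 0) \<in> borel_measurable borel"
    using C.measurable_CI by (subst (asm) measurable_restrict_space_iff) auto
  show qm: "quantile_of f \<in> borel_measurable borel"
    by (subst qform) (intro measurable_If_set Im; simp)
  fix h :: "real \<Rightarrow> ennreal" assume hm[measurable]: "h \<in> borel_measurable borel"
  let ?R = "restrict_space lborel ?\<Omega>"
  have Im2: "C.I \<in> measurable ?R borel"
    using C.measurable_CI by (simp add: measurable_restrict_space1 cong: measurable_cong_sets)
  have "(\<integral>\<^sup>+x. ennreal (f x) * h x \<partial>lborel) = (\<integral>\<^sup>+x. h x \<partial>?M)"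
    by (simp add: nn_integral_density)
  also have "\<dots> = (\<integral>\<^sup>+x. h x \<partial>distr ?R borel C.I)"
    by (simp add: C.distr_I_eq_M)
  also have "\<dots> = (\<integral>\<^sup>+u. h (C.I u) \<partial>?R)"
    by (rule nn_integral_distr[OF Im2]) simp
  also have "\<dots> = (\<integral>\<^sup>+u. h (C.I u) * indicator ?\<Omega> u \<partial>lborel)"
    by (rule nn_integral_restrict_space) simp
  also have "\<dots> = (\<integral>\<^sup>+u. h (quantile_of f u) * indicator ?\<Omega> u \<partial>lborel)"
    by (intro nn_integral_cong) (simp add: qI)
  finally show "(\<integral>\<^sup>+u. h (quantile_of f u) * indicator {0<..<1} u \<partial>lborel) = (\<integral>\<^sup>+x. ennreal (f x) * h x \<partial>lborel)" ..
qed

lemma young_tangent: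
  fixes \<alpha> t r :: real
  assumes "\<alpha> > 1" "t \<ge> 0" "r \<ge> 0"
  shows "\<alpha> * r powr (\<alpha> - 1) * t \<le> t powr \<alpha> + (\<alpha> - 1) * r powr \<alpha>"
proof -
  let ?q = "\<alpha> / (\<alpha> - 1)"
  have q: "?q > 1" "1 / \<alpha> + 1 / ?q = 1" using assms by (auto simp: field_simps)
  have "t * r powr (\<alpha> - 1) \<le> t powr \<alpha> / \<alpha> + (r powr (\<alpha> - 1)) powr ?q / ?q"
    by (rule Youngs_inequality) (use assms q in auto)
  also have "(r powr (\<alpha> - 1)) powr ?q = r powr \<alpha>"
    using assms by (simp add: powr_powr)
  finally have "t * r powr (\<alpha> - 1) \<le> t powr \<alpha> / \<alpha> + r powr \<alpha> / ?q" .
  then have "\<alpha> * (t * r powr (\<alpha> - 1)) \<le> \<alpha> * (t powr \<alpha> / \<alpha> + r powr \<alpha> / ?q)"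
    using assms by (intro mult_left_mono) auto
  moreover have "\<alpha> * (t powr \<alpha> / \<alpha> + r powr \<alpha> / ?q) = t powr \<alpha> + (\<alpha> - 1) * r powr \<alpha>"
    using assms by (simp add: distrib_left)
  ultimately show ?thesis by (metis mult.assoc mult.commute)
qed

lemma tangent2:
  fixes \<alpha> a b r :: real
  assumes "\<alpha> > 1" "a \<ge> 0" "b > 0" "r \<ge> 0"
  shows "\<alpha> * r powr (\<alpha> - 1) * a \<le> a powr \<alpha> * b powr (1 - \<alpha>) + (\<alpha> - 1) * r powr \<alpha> * b"
proof -
  have "\<alpha> * r powr (\<alpha> - 1) * (a / b) \<le> (a / b) powr \<alpha> + (\<alpha> - 1) * r powr \<alpha>"
    by (rule young_tangent) (use assms in auto)
  then have "b * (\<alpha> * r powr (\<alpha> - 1) * (a / b)) \<le> b * ((a / b) powr \<alpha> + (\<alpha> - 1) * r powr \<alpha>)"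
    using assms by (intro mult_left_mono) auto
  moreover have "b * (a / b) powr \<alpha> = a powr \<alpha> * b powr (1 - \<alpha>)"
    using assms by (simp add: powr_divide powr_diff field_simps)
  ultimately show ?thesis using assms by (simp add: field_simps)
qed


lemma gauss_point:
  fixes s \<alpha> x x' y :: real
  assumes s: "s > 0"
  shows "normal_density 0 (sqrt s) (y - x) powr \<alpha> * normal_density 0 (sqrt s) (y - x') powr (1 - \<alpha>)
    = normal_density (\<alpha> * x + (1 - \<alpha>) * x') (sqrt s) y * exp (\<alpha> * (\<alpha> - 1) * (x - x')\<^sup>2 / (2 * s))"
proof -
  define c where "c = 1 / sqrt (2 * pi * s)"
  have c: "c > 0" using s by (simp add: c_def)
  have N: "normal_density m (sqrt s) z = c * exp (- (z - m)\<^sup>2 / (2 * s))" for m z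
    using s by (simp add: normal_density_def c_def)
  have "normal_density 0 (sqrt s) (y - x) powr \<alpha> * normal_density 0 (sqrt s) (y - x') powr (1 - \<alpha>)
     = (c powr \<alpha> * c powr (1 - \<alpha>)) * exp (- (y - x)\<^sup>2 / (2 * s) * \<alpha> + - (y - x')\<^sup>2 / (2 * s) * (1 - \<alpha>))"
    using c by (simp add: N powr_mult exp_powr_real mult_exp_exp)
  also have "c powr \<alpha> * c powr (1 - \<alpha>) = c"
    using c by (simp add: powr_add[symmetric])
  also have "- (y - x)\<^sup>2 / (2 * s) * \<alpha> + - (y - x')\<^sup>2 / (2 * s) * (1 - \<alpha>)
      = - (y - (\<alpha> * x + (1 - \<alpha>) * x'))\<^sup>2 / (2 * s) + \<alpha> * (\<alpha> - 1) * (x - x')\<^sup>2 / (2 * s)"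
    using s by (simp add: field_simps power2_eq_square)
  finally show ?thesis
    by (simp add: N mult_exp_exp)
qed

lemma nn_integral_normal:
  "sg > 0 \<Longrightarrow> (\<integral>\<^sup>+ y. ennreal (normal_density m sg y) \<partial>lborel) = 1"
  by (subst nn_integral_eq_integral) (auto intro: integrable_normal_density)

lemma gauss_renyi:
  fixes s \<alpha> x x' :: real
  assumes s: "s > 0"
  shows "(\<integral>\<^sup>+ y. ennreal (normal_density 0 (sqrt s) (y - x) powr \<alpha> * normal_density 0 (sqrt s) (y - x') powr (1 - \<alpha>)) \<partial>lborel)
    = ennreal (exp (\<alpha> * (\<alpha> - 1) * (x - x')\<^sup>2 / (2 * s)))"
proof -
  have "(\<integral>\<^sup>+ y. ennreal (normal_density 0 (sqrt s) (y - x) powr \<alpha> * normal_density 0 (sqrt s) (y - x') powr (1 - \<alpha>)) \<partial>lborel)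
     = (\<integral>\<^sup>+ y. ennreal (exp (\<alpha> * (\<alpha> - 1) * (x - x')\<^sup>2 / (2 * s))) * ennreal (normal_density (\<alpha> * x + (1 - \<alpha>) * x') (sqrt s) y) \<partial>lborel)"
    by (intro nn_integral_cong) (simp add: gauss_point[OF s] ennreal_mult' mult.commute)
  also have "\<dots> = ennreal (exp (\<alpha> * (\<alpha> - 1) * (x - x')\<^sup>2 / (2 * s)))"
    by (subst nn_integral_cmult) (auto simp: nn_integral_normal s)
  finally show ?thesis .
qed


lemma pair_bound:
  fixes \<alpha> \<epsilon> s v :: real and f1 f2 :: "real \<Rightarrow> real"
  assumes alpha: "\<alpha> > 1" and eps: "\<epsilon> > 0" and d1: "is_density f1" and d2: "is_density f2"
    and v: "v > 0" "v \<le> s"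
    and eq: "(\<integral>\<^sup>+ z. ennreal (exp (\<alpha> * (\<alpha> - 1) * (fst z - snd z)\<^sup>2 / (2 * v)))
           \<partial>comonotone_coupling f1 f2) = ennreal (exp ((\<alpha> - 1) * \<epsilon>))"
  shows "renyi_div \<alpha> (conv_density (normal_density 0 (sqrt s)) f1) (conv_density (normal_density 0 (sqrt s)) f2) \<le> ereal \<epsilon>"
proof -
  have s: "s > 0" using v by simp
  define N where "N = normal_density 0 (sqrt s)"
  define c where "c = 1 / sqrt (2 * pi * s)"
  have Nm[measurable]: "N \<in> borel_measurable borel" unfolding N_def by simp
  have Npos: "N z > 0" for z unfolding N_def using s by (simp add: normal_density_pos)
  have Nnn: "N z \<ge> 0" for z using Npos[of z] by simp
  have Nle: "N z \<le> c" for z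
  proof -
    have "exp (- (z\<^sup>2 / (2 * s))) \<le> 1" using s by simp
    then show ?thesis
      unfolding N_def c_def normal_density_def using s by (simp add: divide_right_mono)
  qed
  let ?\<Omega> = "{0<..<1::real}"
  define q1 where "q1 = quantile_of f1"
  define q2 where "q2 = quantile_of f2"
  have q1m[measurable]: "q1 \<in> borel_measurable borel" unfolding q1_def by (rule quantile_props(1)[OF d1])
  have q2m[measurable]: "q2 \<in> borel_measurable borel" unfolding q2_def by (rule quantile_props(1)[OF d2])
  have conv: "ennreal (conv_density N f y) = (\<integral>\<^sup>+u. ennreal (N (y - quantile_of f u)) * indicator ?\<Omega> u \<partial>lborel)"
    and conv_nn: "conv_density N f y \<ge> 0"
    if df: "is_density f" for f y
  proof -
    have fm[measurable]: "f \<in> borel_measurable borel" and fnn: "\<And>x. 0 \<le> f x"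
      and f1: "(\<integral>\<^sup>+ x. ennreal (f x) \<partial>lborel) = 1"
      using df unfolding is_density_def by auto
    have "(\<integral>\<^sup>+u. ennreal (N (y - quantile_of f u)) * indicator ?\<Omega> u \<partial>lborel)
        = (\<integral>\<^sup>+x. ennreal (f x) * ennreal (N (y - x)) \<partial>lborel)"
      by (rule quantile_props(2)[OF df]) simp
    also have "\<dots> = (\<integral>\<^sup>+x. ennreal (N (y - x) * f x) \<partial>lborel)"
      using fnn Npos by (intro nn_integral_cong) (simp add: ennreal_mult' mult.commute less_imp_le)
    finally have E: "(\<integral>\<^sup>+u. ennreal (N (y - quantile_of f u)) * indicator ?\<Omega> u \<partial>lborel)
        = (\<integral>\<^sup>+x. ennreal (N (y - x) * f x) \<partial>lborel)" .
    have "(\<integral>\<^sup>+x. ennreal (N (y - x) * f x) \<partial>lborel) \<le> (\<integral>\<^sup>+x. ennreal c * ennreal (f x) \<partial>lborel)"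
    proof (intro nn_integral_mono)
      fix x
      have "c \<ge> 0" using Nle[of 0] Npos[of 0] by simp
      then have "ennreal c * ennreal (f x) = ennreal (c * f x)" using fnn[of x] by (simp add: ennreal_mult)
      moreover have "N (y - x) * f x \<le> c * f x" using fnn Nle by (simp add: mult_right_mono)
      ultimately show "ennreal (N (y - x) * f x) \<le> ennreal c * ennreal (f x)" by (simp add: ennreal_leI)
    qed
    also have "\<dots> = ennreal c" by (simp add: nn_integral_cmult f1)
    finally have fin: "(\<integral>\<^sup>+x. ennreal (N (y - x) * f x) \<partial>lborel) < \<infinity>" by (simp add: le_less_trans)
    have cd: "conv_density N f y = enn2real (\<integral>\<^sup>+x. ennreal (N (y - x) * f x) \<partial>lborel)"
      unfolding conv_density_def
      by (rule integral_eq_nn_integral) (use fnn Nnn in \<open>auto intro!: AE_I2 mult_nonneg_nonneg\<close>)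
    show "conv_density N f y \<ge> 0" by (simp add: cd)
    show "ennreal (conv_density N f y) = (\<integral>\<^sup>+u. ennreal (N (y - quantile_of f u)) * indicator ?\<Omega> u \<partial>lborel)"
      unfolding cd E using fin by simp
  qed
  define P where "P y = conv_density N f1 y" for y
  define Q where "Q y = conv_density N f2 y" for y
  have Pnn: "P y \<ge> 0" and Qnn: "Q y \<ge> 0" for y
    unfolding P_def Q_def using conv_nn d1 d2 by auto
  have PA: "ennreal (P y) = (\<integral>\<^sup>+u. ennreal (N (y - q1 u)) * indicator ?\<Omega> u \<partial>lborel)" for y
    unfolding P_def q1_def by (rule conv[OF d1])
  have QB: "ennreal (Q y) = (\<integral>\<^sup>+u. ennreal (N (y - q2 u)) * indicator ?\<Omega> u \<partial>lborel)" for y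
    unfolding Q_def q2_def by (rule conv[OF d2])
  define \<phi> where "\<phi> u y = N (y - q1 u) powr \<alpha> * N (y - q2 u) powr (1 - \<alpha>)" for u y
  have \<phi>m[measurable]: "(\<lambda>(u, y). \<phi> u y) \<in> borel_measurable (lborel \<Otimes>\<^sub>M lborel)"
    unfolding \<phi>_def by measurable
  have key: "ennreal (P y powr \<alpha> * Q y powr (1 - \<alpha>)) \<le> (\<integral>\<^sup>+u. ennreal (\<phi> u y) * indicator ?\<Omega> u \<partial>lborel)" for y
  proof (cases "P y = 0 \<or> Q y = 0")
    case True then show ?thesis by auto
  next
    case False
    then have Pp: "P y > 0" and Qp: "Q y > 0" using Pnn[of y] Qnn[of y] by auto
    define r where "r = P y / Q y"
    define K where "K = P y powr \<alpha> * Q y powr (1 - \<alpha>)"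
    have rp: "r > 0" using Pp Qp by (simp add: r_def)
    have c1: "\<alpha> * r powr (\<alpha> - 1) \<ge> 0" and c2: "(\<alpha> - 1) * r powr \<alpha> \<ge> 0" using alpha by auto
    have id1: "r powr (\<alpha> - 1) * P y = K"
      using Pp Qp unfolding r_def K_def by (simp add: powr_divide powr_diff powr_minus_divide field_simps)
    have id2: "r powr \<alpha> * Q y = K"
      using Pp Qp unfolding r_def K_def by (simp add: powr_divide powr_diff powr_minus_divide field_simps)
    have pt: "ennreal (\<alpha> * r powr (\<alpha> - 1)) * (ennreal (N (y - q1 u)) * indicator ?\<Omega> u)
      \<le> ennreal (\<phi> u y) * indicator ?\<Omega> u + ennreal ((\<alpha> - 1) * r powr \<alpha>) * (ennreal (N (y - q2 u)) * indicator ?\<Omega> u)" for u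
    proof -
      have "\<alpha> * r powr (\<alpha> - 1) * N (y - q1 u) \<le> \<phi> u y + (\<alpha> - 1) * r powr \<alpha> * N (y - q2 u)"
        unfolding \<phi>_def by (rule tangent2) (use alpha Nnn Npos rp in auto)
      then have h1: "ennreal (\<alpha> * r powr (\<alpha> - 1) * N (y - q1 u)) \<le> ennreal (\<phi> u y) + ennreal ((\<alpha> - 1) * r powr \<alpha> * N (y - q2 u))"
      proof -
        have "ennreal (\<phi> u y) + ennreal ((\<alpha> - 1) * r powr \<alpha> * N (y - q2 u)) = ennreal (\<phi> u y + (\<alpha> - 1) * r powr \<alpha> * N (y - q2 u))"
          using c2 Nnn[of "y - q2 u"] by (intro ennreal_plus[symmetric]) (auto simp: \<phi>_def)
        with \<open>\<alpha> * r powr (\<alpha> - 1) * N (y - q1 u) \<le> _\<close> show ?thesis by (simp add: ennreal_leI)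
      qed
      have h2: "ennreal (\<alpha> * r powr (\<alpha> - 1)) * ennreal (N (y - q1 u)) = ennreal (\<alpha> * r powr (\<alpha> - 1) * N (y - q1 u))"
        using c1 Nnn[of "y - q1 u"] by (rule ennreal_mult[symmetric])
      have h3: "ennreal ((\<alpha> - 1) * r powr \<alpha>) * ennreal (N (y - q2 u)) = ennreal ((\<alpha> - 1) * r powr \<alpha> * N (y - q2 u))"
        using c2 Nnn[of "y - q2 u"] by (rule ennreal_mult[symmetric])
      show ?thesis
      proof (cases "u \<in> ?\<Omega>")
        case True
        then have "indicator ?\<Omega> u = (1::ennreal)" by simp
        with h1 h2 h3 show ?thesis by (simp only: mult_1_right)
      next
        case False
        then have "indicator ?\<Omega> u = (0::ennreal)" by simp
        then show ?thesis by (simp only: mult_zero_right add_0_left order_refl)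
      qed
    qed
    have "ennreal (\<alpha> * K) = ennreal (\<alpha> * r powr (\<alpha> - 1)) * ennreal (P y)"
    proof -
      have "\<alpha> * K = \<alpha> * r powr (\<alpha> - 1) * P y" using id1 by (simp only: mult.assoc)
      then show ?thesis using ennreal_mult[OF c1 Pnn[of y]] by (simp only:)
    qed
    also have "\<dots> = (\<integral>\<^sup>+u. ennreal (\<alpha> * r powr (\<alpha> - 1)) * (ennreal (N (y - q1 u)) * indicator ?\<Omega> u) \<partial>lborel)"
      unfolding PA by (rule nn_integral_cmult[symmetric]) measurable
    also have "\<dots> \<le> (\<integral>\<^sup>+u. ennreal (\<phi> u y) * indicator ?\<Omega> u + ennreal ((\<alpha> - 1) * r powr \<alpha>) * (ennreal (N (y - q2 u)) * indicator ?\<Omega> u) \<partial>lborel)"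
      by (intro nn_integral_mono pt)
    also have "\<dots> = (\<integral>\<^sup>+u. ennreal (\<phi> u y) * indicator ?\<Omega> u \<partial>lborel) + (\<integral>\<^sup>+u. ennreal ((\<alpha> - 1) * r powr \<alpha>) * (ennreal (N (y - q2 u)) * indicator ?\<Omega> u) \<partial>lborel)"
      by (rule nn_integral_add) (simp_all add: \<phi>_def)
    also have "(\<integral>\<^sup>+u. ennreal ((\<alpha> - 1) * r powr \<alpha>) * (ennreal (N (y - q2 u)) * indicator ?\<Omega> u) \<partial>lborel)
        = ennreal ((\<alpha> - 1) * r powr \<alpha>) * ennreal (Q y)"
      unfolding QB by (rule nn_integral_cmult) measurable
    also have "ennreal ((\<alpha> - 1) * r powr \<alpha>) * ennreal (Q y) = ennreal ((\<alpha> - 1) * K)"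
    proof -
      have "(\<alpha> - 1) * K = (\<alpha> - 1) * r powr \<alpha> * Q y" using id2 by (simp only: mult.assoc)
      then show ?thesis using ennreal_mult[OF c2 Qnn[of y]] by (simp only:)
    qed
    finally have ineq: "ennreal (\<alpha> * K) \<le> (\<integral>\<^sup>+u. ennreal (\<phi> u y) * indicator ?\<Omega> u \<partial>lborel) + ennreal ((\<alpha> - 1) * K)" .
    have Kp: "K \<ge> 0" unfolding K_def by simp
    show ?thesis
    proof (cases "(\<integral>\<^sup>+u. ennreal (\<phi> u y) * indicator ?\<Omega> u \<partial>lborel) = \<infinity>")
      case True then show ?thesis by simp
    next
      case False
      then obtain w where w: "(\<integral>\<^sup>+u. ennreal (\<phi> u y) * indicator ?\<Omega> u \<partial>lborel) = ennreal w" "w \<ge> 0"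
      proof -
        have "(\<integral>\<^sup>+u. ennreal (\<phi> u y) * indicator ?\<Omega> u \<partial>lborel) < top"
          using False by (simp add: top.not_eq_extremum)
        then show ?thesis using less_top_ennreal that by blast
      qed
      have "ennreal (\<alpha> * K) \<le> ennreal (w + (\<alpha> - 1) * K)"
      proof -
        have "ennreal w + ennreal ((\<alpha> - 1) * K) = ennreal (w + (\<alpha> - 1) * K)"
          using w Kp alpha by (intro ennreal_plus[symmetric]) auto
        then show ?thesis using ineq w(1) by simp
      qed
      then have "\<alpha> * K \<le> w + (\<alpha> - 1) * K"
        using w Kp alpha by (subst (asm) ennreal_le_iff) (auto simp del: ennreal_le_iff)
      then have "K \<le> w" by (simp add: algebra_simps)
      then show ?thesis unfolding w(1) K_def by (simp add: ennreal_leI)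
    qed
  qed
  have "(\<integral>\<^sup>+ y. ennreal (P y powr \<alpha> * Q y powr (1 - \<alpha>)) \<partial>lborel)
     \<le> (\<integral>\<^sup>+ y. (\<integral>\<^sup>+u. ennreal (\<phi> u y) * indicator ?\<Omega> u \<partial>lborel) \<partial>lborel)"
    by (intro nn_integral_mono key)
  also have "\<dots> = (\<integral>\<^sup>+ u. (\<integral>\<^sup>+y. ennreal (\<phi> u y) * indicator ?\<Omega> u \<partial>lborel) \<partial>lborel)"
    by (rule lborel_pair.Fubini') measurable
  also have "\<dots> = (\<integral>\<^sup>+ u. ennreal (exp (\<alpha> * (\<alpha> - 1) * (q1 u - q2 u)\<^sup>2 / (2 * s))) * indicator ?\<Omega> u \<partial>lborel)"
    unfolding \<phi>_def N_def
    by (intro nn_integral_cong) (simp add: nn_integral_multc gauss_renyi[OF s])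
  also have "\<dots> \<le> (\<integral>\<^sup>+ u. ennreal (exp (\<alpha> * (\<alpha> - 1) * (q1 u - q2 u)\<^sup>2 / (2 * v))) * indicator ?\<Omega> u \<partial>lborel)"
  proof (intro nn_integral_mono mult_right_mono ennreal_leI)
    fix u
    have "\<alpha> * (\<alpha> - 1) * (q1 u - q2 u)\<^sup>2 \<ge> 0" using alpha by simp
    then show "exp (\<alpha> * (\<alpha> - 1) * (q1 u - q2 u)\<^sup>2 / (2 * s)) \<le> exp (\<alpha> * (\<alpha> - 1) * (q1 u - q2 u)\<^sup>2 / (2 * v))"
      using v by (simp add: frac_le)
  qed simp
  also have "\<dots> = ennreal (exp ((\<alpha> - 1) * \<epsilon>))"
  proof -
    let ?U = "uniform_measure lborel ?\<Omega>"
    let ?G = "\<lambda>z::real\<times>real. ennreal (exp (\<alpha> * (\<alpha> - 1) * (fst z - snd z)\<^sup>2 / (2 * v)))"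
    have Tm: "(\<lambda>u. (q1 u, q2 u)) \<in> measurable ?U borel"
      by (simp cong: measurable_cong_sets) measurable
    have "(\<integral>\<^sup>+ z. ?G z \<partial>comonotone_coupling f1 f2) = (\<integral>\<^sup>+ z. ?G z \<partial>distr ?U borel (\<lambda>u. (q1 u, q2 u)))"
      unfolding comonotone_coupling_def q1_def q2_def ..
    also have "\<dots> = (\<integral>\<^sup>+ u. ?G (q1 u, q2 u) \<partial>?U)"
      by (rule nn_integral_distr[OF Tm]) (simp, intro borel_measurable_continuous_onI continuous_intros, use v in simp)
    also have "\<dots> = (\<integral>\<^sup>+ u. ?G (q1 u, q2 u) * indicator ?\<Omega> u \<partial>lborel) / emeasure lborel ?\<Omega>"
      by (rule nn_integral_uniform_measure) auto
    also have "\<dots> = (\<integral>\<^sup>+ u. ennreal (exp (\<alpha> * (\<alpha> - 1) * (q1 u - q2 u)\<^sup>2 / (2 * v))) * indicator ?\<Omega> u \<partial>lborel)"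
      by (simp add: divide_ennreal_def)
    finally show ?thesis using eq by simp
  qed
  finally have Ib: "(\<integral>\<^sup>+ y. ennreal (P y powr \<alpha> * Q y powr (1 - \<alpha>)) \<partial>lborel) \<le> ennreal (exp ((\<alpha> - 1) * \<epsilon>))" .
  define I where "I = (\<integral>\<^sup>+ y. ennreal (P y powr \<alpha> * Q y powr (1 - \<alpha>)) \<partial>lborel)"
  have Ifin: "I \<noteq> \<infinity>" using Ib unfolding I_def by (auto simp: top_unique)
  have Ile: "enn2real I \<le> exp ((\<alpha> - 1) * \<epsilon>)"
    using Ib unfolding I_def by (simp add: enn2real_leI)
  have "ln (enn2real I) / (\<alpha> - 1) \<le> \<epsilon>"
  proof (cases "enn2real I = 0")
    case True then show ?thesis using eps by simp
  next
    case False
    then have "enn2real I > 0" by (simp add: enn2real_nonneg order_less_le)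
    then have "ln (enn2real I) \<le> (\<alpha> - 1) * \<epsilon>"
      using Ile by (metis ln_exp ln_le_cancel_iff exp_gt_zero)
    then show ?thesis using alpha by (simp add: divide_le_eq mult.commute)
  qed
  then show ?thesis
    unfolding renyi_div_def Let_def I_def[symmetric] P_def[symmetric] Q_def[symmetric] N_def[symmetric]
    using Ifin by simp
qed

theorem theorem2:
  fixes \<alpha> \<epsilon> \<sigma>2 :: real
    and Priors :: "'p set" and SS :: "('s \<times> 's) set"
    and PX :: "'s \<Rightarrow> 'p \<Rightarrow> real \<Rightarrow> real"
    and v :: "'s \<Rightarrow> 's \<Rightarrow> 'p \<Rightarrow> real"
  assumes eps: "\<epsilon> > 0" and alpha: "\<alpha> > 1"
    and dens: "\<And>s \<rho>. \<rho> \<in> Priors \<Longrightarrow> is_density (PX s \<rho>)"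
    and v_pos: "\<And>si sj \<rho>. (si, sj) \<in> SS \<Longrightarrow> \<rho> \<in> Priors \<Longrightarrow> v si sj \<rho> > 0"
    and v_eq: "\<And>si sj \<rho>. (si, sj) \<in> SS \<Longrightarrow> \<rho> \<in> Priors \<Longrightarrow>
        (\<integral>\<^sup>+ z. ennreal (exp (\<alpha> * (\<alpha> - 1) * (fst z - snd z)\<^sup>2 / (2 * v si sj \<rho>)))
           \<partial>comonotone_coupling (PX si \<rho>) (PX sj \<rho>)) = ennreal (exp ((\<alpha> - 1) * \<epsilon>))"
    and max_attained: "\<exists>si sj \<rho>. (si, sj) \<in> SS \<and> \<rho> \<in> Priors \<and> \<sigma>2 = v si sj \<rho>"
    and max_bound: "\<And>si sj \<rho>. (si, sj) \<in> SS \<Longrightarrow> \<rho> \<in> Priors \<Longrightarrow> v si sj \<rho> \<le> \<sigma>2"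
  shows "renyi_pufferfish \<alpha> \<epsilon> Priors SS PX (normal_density 0 (sqrt \<sigma>2))"
  unfolding renyi_pufferfish_def
proof (intro ballI, clarify)
  fix \<rho> si sj assume \<rho>: "\<rho> \<in> Priors" and ss: "(si, sj) \<in> SS"
  show "renyi_div \<alpha> (conv_density (normal_density 0 (sqrt \<sigma>2)) (PX si \<rho>))
          (conv_density (normal_density 0 (sqrt \<sigma>2)) (PX sj \<rho>)) \<le> ereal \<epsilon>"
    by (rule pair_bound[OF alpha eps dens[OF \<rho>] dens[OF \<rho>] v_pos[OF ss \<rho>] max_bound[OF ss \<rho>] v_eq[OF ss \<rho>]])
qed

end
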